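(* Let $A$ be a unital ring and let $p\in A$ be a full idempotent. Then $\operatorname{sr}(A)\le \operatorname{sr}(pAp)$.
   Context: An idempotent $p$ in a unital ring $A$ is full if $ApA=A$ (the two-sided ideal generated by $p$ is $A$). A row $(a_1,\dots,a_n)\in A^n$ is right unimodular if $\sum_{i=1}^n a_iA=A$. A row $(a_1,\dots,a_n,b)\in A^{n+1}$ is reducible if there exist $c_1,\dots,c_n\in A$ such that $(a_1+bc_1,\dots,a_n+bc_n)$ is right unimodular. The (Bass) stable rank $\operatorname{sr}(A)$ is the least positive integer $n$ such that every right unimodular row in $A^{n+1}$ is reducible, or $\infty$ if no such $n$ exists. The corner $pAp$ is a ring with identity $p$. *)

theory Defs
  imports Main "HOL-Library.Extended_Nat"
begin

text \<open>A corner ring pAp is modelled as a subset S of the ambient ring with its own identity e;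
  the ring A itself is the case S = UNIV, e = 1.  Rows of length n are functions on {..<n}.\<close>

definition two_sided_ideal_gen :: "'a::ring_1 \<Rightarrow> 'a set" where
  "two_sided_ideal_gen p = {x. \<exists>(m::nat) a b. x = (\<Sum>i<m. a i * p * b i)}"

definition full_idempotent :: "'a::ring_1 \<Rightarrow> bool" where
  "full_idempotent p \<longleftrightarrow> p * p = p \<and> two_sided_ideal_gen p = UNIV"

definition corner :: "'a::ring_1 \<Rightarrow> 'a set" where
  "corner p = {p * a * p | a. True}"

definition right_unimodular :: "'a::ring_1 set \<Rightarrow> 'a \<Rightarrow> (nat \<Rightarrow> 'a) \<Rightarrow> nat \<Rightarrow> bool" where
  "right_unimodular S e a n \<longleftrightarrow>
     (\<exists>x. (\<forall>i<n. x i \<in> S) \<and> (\<Sum>i<n. a i * x i) = e)"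

definition reducible :: "'a::ring_1 set \<Rightarrow> 'a \<Rightarrow> (nat \<Rightarrow> 'a) \<Rightarrow> nat \<Rightarrow> bool" where
  "reducible S e a n \<longleftrightarrow>
     (\<exists>c. (\<forall>i<n. c i \<in> S) \<and> right_unimodular S e (\<lambda>i. a i + a n * c i) n)"

definition sr_condition :: "'a::ring_1 set \<Rightarrow> 'a \<Rightarrow> nat \<Rightarrow> bool" where
  "sr_condition S e n \<longleftrightarrow>
     (\<forall>a. (\<forall>i\<le>n. a i \<in> S) \<longrightarrow> right_unimodular S e a (Suc n) \<longrightarrow> reducible S e a n)"

definition stable_rank :: "'a::ring_1 set \<Rightarrow> 'a \<Rightarrow> enat" where
  "stable_rank S e =
     (if \<exists>n. 1 \<le> n \<and> sr_condition S e n
      then enat (LEAST n. 1 \<le> n \<and> sr_condition S e n) else \<infinity>)"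

end

theory Submission
  imports Defs
begin

locale idem =
  fixes p :: "'a::ring_1"
  assumes idem: "p * p = p"
begin

abbreviation "R \<equiv> corner p"

lemma R_iff: "x \<in> R \<longleftrightarrow> p * x * p = x"
  unfolding corner_def
proof
  assume "x \<in> {p * a * p |a. True}"
  then obtain a where "x = p * a * p" by auto
  then show "p * x * p = x" by (metis idem mult.assoc)
next
  assume "p * x * p = x" then show "x \<in> {p * a * p |a. True}" by (metis (mono_tags, lifting) mem_Collect_eq)
qed

lemma RI: "p * a * p \<in> R" unfolding corner_def by auto

lemma Rl: "x \<in> R \<Longrightarrow> p * x = x"
  by (metis R_iff idem mult.assoc)
lemma Rr: "x \<in> R \<Longrightarrow> x * p = x"
  by (metis R_iff idem mult.assoc)

lemma R0[simp]: "0 \<in> R" using R_iff by simp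
lemma Rp[simp]: "p \<in> R" using R_iff idem by simp
lemma Radd[simp]: "x \<in> R \<Longrightarrow> y \<in> R \<Longrightarrow> x + y \<in> R"
  unfolding R_iff by (simp add: distrib_left distrib_right)
lemma Rdiff[simp]: "x \<in> R \<Longrightarrow> y \<in> R \<Longrightarrow> x - y \<in> R"
  unfolding R_iff by (simp add: left_diff_distrib right_diff_distrib)
lemma Rminus[simp]: "x \<in> R \<Longrightarrow> - x \<in> R"
  unfolding R_iff by simp
lemma Rmult[simp]: "x \<in> R \<Longrightarrow> y \<in> R \<Longrightarrow> x * y \<in> R"
proof -
  assume a: "x \<in> R" "y \<in> R"
  have "p * (x * y) * p = (p * x) * (y * p)" by (simp add: mult.assoc)
  also have "\<dots> = x * y" using a Rl Rr by simp
  finally show ?thesis unfolding R_iff .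
qed
lemma Rsum[simp]: "(\<And>j. j \<in> F \<Longrightarrow> f j \<in> R) \<Longrightarrow> (\<Sum>j\<in>F. f j) \<in> R"
  by (induction F rule: infinite_finite_induct) auto

definition vecR :: "nat \<Rightarrow> (nat \<Rightarrow> 'a) \<Rightarrow> bool" where
  "vecR k x \<longleftrightarrow> (\<forall>i<k. x i \<in> R)"

definition submod :: "nat \<Rightarrow> (nat \<Rightarrow> 'a) set \<Rightarrow> bool" where
  "submod k M \<longleftrightarrow> (\<forall>x\<in>M. vecR k x) \<and> (\<lambda>_. 0) \<in> M \<and>
     (\<forall>x\<in>M. \<forall>y\<in>M. (\<lambda>i. x i + y i) \<in> M) \<and> (\<forall>x\<in>M. \<forall>r\<in>R. (\<lambda>i. x i * r) \<in> M)"

definition inspan :: "nat \<Rightarrow> nat \<Rightarrow> (nat \<Rightarrow> nat \<Rightarrow> 'a) \<Rightarrow> (nat \<Rightarrow> 'a) set \<Rightarrow> (nat \<Rightarrow> 'a) \<Rightarrow> bool" where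
  "inspan k N G M x \<longleftrightarrow> (\<exists>\<alpha> w. (\<forall>j<N. \<alpha> j \<in> R) \<and> w \<in> M \<and>
     (\<forall>i<k. x i = (\<Sum>j<N. G j i * \<alpha> j) + w i))"

definition msum :: "(nat \<Rightarrow> 'a) set \<Rightarrow> (nat \<Rightarrow> 'a) set \<Rightarrow> (nat \<Rightarrow> 'a) set" where
  "msum W U = {(\<lambda>i. w i + u i) | w u. w \<in> W \<and> u \<in> U}"

lemma submod_vec: "submod k M \<Longrightarrow> x \<in> M \<Longrightarrow> i < k \<Longrightarrow> x i \<in> R"
  unfolding submod_def vecR_def by blast
lemma submod_zero: "submod k M \<Longrightarrow> (\<lambda>_. 0) \<in> M"
  unfolding submod_def by blast
lemma submod_add: "submod k M \<Longrightarrow> x \<in> M \<Longrightarrow> y \<in> M \<Longrightarrow> (\<lambda>i. x i + y i) \<in> M"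
  unfolding submod_def by blast
lemma submod_scale: "submod k M \<Longrightarrow> x \<in> M \<Longrightarrow> r \<in> R \<Longrightarrow> (\<lambda>i. x i * r) \<in> M"
  unfolding submod_def by blast

lemma submod_sum:
  assumes M: "submod k M" and F: "finite F"
  shows "(\<forall>j\<in>F. f j \<in> M \<and> r j \<in> R) \<Longrightarrow> (\<lambda>i. \<Sum>j\<in>F. f j i * r j) \<in> M"
  using F
proof (induction F rule: finite_induct)
  case empty
  then show ?case using submod_zero[OF M] by simp
next
  case (insert a F)
  have 1: "(\<lambda>i. f a i * r a) \<in> M" using insert.prems submod_scale[OF M] by simp
  have 2: "(\<lambda>i. \<Sum>j\<in>F. f j i * r j) \<in> M" using insert by simp
  have "(\<lambda>i. (\<lambda>i. f a i * r a) i + (\<lambda>i. \<Sum>j\<in>F. f j i * r j) i) \<in> M"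
    by (rule submod_add[OF M 1 2])
  then show ?case using insert.hyps by simp
qed

lemma msumI: "w \<in> W \<Longrightarrow> u \<in> U \<Longrightarrow> (\<lambda>i. w i + u i) \<in> msum W U"
  unfolding msum_def by blast

lemma msumE: "x \<in> msum W U \<Longrightarrow> (\<And>w u. x = (\<lambda>i. w i + u i) \<Longrightarrow> w \<in> W \<Longrightarrow> u \<in> U \<Longrightarrow> P) \<Longrightarrow> P"
  unfolding msum_def by (auto simp only: mem_Collect_eq)

lemma submod_msum:
  assumes W: "submod k W" and U: "submod k U"
  shows "submod k (msum W U)"
  unfolding submod_def
proof (intro conjI ballI)
  fix x assume "x \<in> msum W U"
  then obtain w u where "x = (\<lambda>i. w i + u i)" "w \<in> W" "u \<in> U" by (rule msumE)
  then show "vecR k x" unfolding vecR_def using submod_vec[OF W] submod_vec[OF U] by simp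
next
  have "(\<lambda>i. (\<lambda>_. 0::'a) i + (\<lambda>_. 0) i) \<in> msum W U"
    by (rule msumI[OF submod_zero[OF W] submod_zero[OF U]])
  then show "(\<lambda>_. 0) \<in> msum W U" by simp
next
  fix x y assume x: "x \<in> msum W U" and y: "y \<in> msum W U"
  obtain w u where xy1: "x = (\<lambda>i. w i + u i)" "w \<in> W" "u \<in> U" using x by (rule msumE)
  obtain w' u' where xy2: "y = (\<lambda>i. w' i + u' i)" "w' \<in> W" "u' \<in> U" using y by (rule msumE)
  note xy = xy1 xy2
  have "(\<lambda>i. x i + y i) = (\<lambda>i. (\<lambda>i. w i + w' i) i + (\<lambda>i. u i + u' i) i)"
    using xy by (simp add: algebra_simps)
  moreover have "(\<lambda>i. (\<lambda>i. w i + w' i) i + (\<lambda>i. u i + u' i) i) \<in> msum W U"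
    by (rule msumI[OF submod_add[OF W xy(2) xy(5)] submod_add[OF U xy(3) xy(6)]])
  ultimately show "(\<lambda>i. x i + y i) \<in> msum W U" by simp
next
  fix x r assume x: "x \<in> msum W U" and "r \<in> R"
  obtain w u where xy: "x = (\<lambda>i. w i + u i)" "w \<in> W" "u \<in> U" using x by (rule msumE)
  have "(\<lambda>i. x i * r) = (\<lambda>i. (\<lambda>i. w i * r) i + (\<lambda>i. u i * r) i)"
    using xy by (simp add: algebra_simps)
  moreover have "(\<lambda>i. (\<lambda>i. w i * r) i + (\<lambda>i. u i * r) i) \<in> msum W U"
    by (rule msumI[OF submod_scale[OF W xy(2) \<open>r\<in>R\<close>] submod_scale[OF U xy(3) \<open>r\<in>R\<close>]])
  ultimately show "(\<lambda>i. x i * r) \<in> msum W U" by simp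
qed

lemma inspan_cong: "inspan k N G M x \<Longrightarrow> (\<forall>i<k. x i = y i) \<Longrightarrow> inspan k N G M y"
  unfolding inspan_def by metis

lemma inspan_M: "w \<in> M \<Longrightarrow> inspan k N G M w"
  unfolding inspan_def by (intro exI[of _ "\<lambda>_. 0"] exI[of _ w]) auto

lemma inspan_gen:
  assumes "j < N" "vecR k (G j)" "submod k M"
  shows "inspan k N G M (G j)"
  unfolding inspan_def
proof (rule exI[of _ "\<lambda>l. if l = j then p else 0"], rule exI[of _ "\<lambda>_. 0"], intro conjI allI impI)
  show "(\<lambda>_. 0) \<in> M" using submod_zero[OF assms(3)] .
  fix i assume "i < k"
  have "(\<Sum>l<N. G l i * (if l = j then p else 0)) = G j i * p"
    using assms(1) by (simp add: if_distrib cong: if_cong)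
  also have "\<dots> = G j i" using assms(2) \<open>i<k\<close> Rr unfolding vecR_def by auto
  finally show "G j i = (\<Sum>l<N. G l i * (if l = j then p else 0)) + 0" by simp
qed auto

lemma inspan_add:
  assumes M: "submod k M" and x: "inspan k N G M x" and y: "inspan k N G M y"
  shows "inspan k N G M (\<lambda>i. x i + y i)"
proof -
  obtain \<alpha> w where a: "\<forall>j<N. \<alpha> j \<in> R" "w \<in> M" "\<forall>i<k. x i = (\<Sum>j<N. G j i * \<alpha> j) + w i"
    using x unfolding inspan_def by blast
  obtain \<beta> w' where b: "\<forall>j<N. \<beta> j \<in> R" "w' \<in> M" "\<forall>i<k. y i = (\<Sum>j<N. G j i * \<beta> j) + w' i"
    using y unfolding inspan_def by blast
  show ?thesis unfolding inspan_def
  proof (rule exI[of _ "\<lambda>j. \<alpha> j + \<beta> j"], rule exI[of _ "\<lambda>i. w i + w' i"], intro conjI allI impI)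
    show "(\<lambda>i. w i + w' i) \<in> M" using submod_add[OF M a(2) b(2)] .
    fix i assume "i < k"
    then show "x i + y i = (\<Sum>j<N. G j i * (\<alpha> j + \<beta> j)) + (w i + w' i)"
      using a(3) b(3) by (simp add: distrib_left sum.distrib algebra_simps)
  qed (use a b in auto)
qed

lemma inspan_scale:
  assumes M: "submod k M" and x: "inspan k N G M x" and r: "r \<in> R"
  shows "inspan k N G M (\<lambda>i. x i * r)"
proof -
  obtain \<alpha> w where a: "\<forall>j<N. \<alpha> j \<in> R" "w \<in> M" "\<forall>i<k. x i = (\<Sum>j<N. G j i * \<alpha> j) + w i"
    using x unfolding inspan_def by blast
  show ?thesis unfolding inspan_def
  proof (rule exI[of _ "\<lambda>j. \<alpha> j * r"], rule exI[of _ "\<lambda>i. w i * r"], intro conjI allI impI)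
    show "(\<lambda>i. w i * r) \<in> M" using submod_scale[OF M a(2) r] .
    fix i assume "i < k"
    then show "x i * r = (\<Sum>j<N. G j i * (\<alpha> j * r)) + w i * r"
      using a(3) by (simp add: distrib_right sum_distrib_right mult.assoc)
  qed (use a r in auto)
qed

lemma inspan_zero: "submod k M \<Longrightarrow> inspan k N G M (\<lambda>_. 0)"
  using inspan_M submod_zero by blast

lemma inspan_sum:
  assumes M: "submod k M" and F: "finite F"
  shows "(\<forall>j\<in>F. inspan k N G M (f j)) \<Longrightarrow> inspan k N G M (\<lambda>i. \<Sum>j\<in>F. f j i)"
  using F
proof (induction F rule: finite_induct)
  case empty
  then show ?case using inspan_zero[OF M] by simp
next
  case (insert a F)
  have "inspan k N G M (\<lambda>i. f a i + (\<lambda>i. \<Sum>j\<in>F. f j i) i)"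
    using inspan_add[OF M, of N G "f a" "\<lambda>i. \<Sum>j\<in>F. f j i"] insert by simp
  then show ?case using insert.hyps by simp
qed

lemma inspan_trans:
  assumes M: "submod k M"
    and F: "\<forall>j<N1. inspan k N G M (F j)" and x: "inspan k N1 F M x"
  shows "inspan k N G M x"
proof -
  obtain \<beta> w where b: "\<forall>j<N1. \<beta> j \<in> R" "w \<in> M" "\<forall>i<k. x i = (\<Sum>j<N1. F j i * \<beta> j) + w i"
    using x unfolding inspan_def by blast
  have "\<forall>j\<in>{..<N1}. inspan k N G M (\<lambda>i. F j i * \<beta> j)"
    using F b(1) inspan_scale[OF M] by auto
  then have "inspan k N G M (\<lambda>i. \<Sum>j<N1. F j i * \<beta> j)"
    using inspan_sum[OF M, of "{..<N1}"] by simp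
  then have "inspan k N G M (\<lambda>i. (\<lambda>i. \<Sum>j<N1. F j i * \<beta> j) i + w i)"
    using inspan_add[OF M] inspan_M[OF b(2)] by blast
  then show ?thesis using inspan_cong b(3) by fastforce
qed

lemma inspan_vec:
  assumes M: "submod k M" and G: "\<forall>j<N. vecR k (G j)" and x: "inspan k N G M x"
  shows "vecR k x"
proof -
  obtain \<alpha> w where a: "\<forall>j<N. \<alpha> j \<in> R" "w \<in> M" "\<forall>i<k. x i = (\<Sum>j<N. G j i * \<alpha> j) + w i"
    using x unfolding inspan_def by blast
  show ?thesis unfolding vecR_def
  proof (intro allI impI)
    fix i assume i: "i < k"
    have "(\<Sum>j<N. G j i * \<alpha> j) \<in> R" using G a(1) i unfolding vecR_def by (intro Rsum) auto
    then show "x i \<in> R" using a(3) i submod_vec[OF M a(2) i] by simp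
  qed
qed

lemma inspan_diff:
  assumes M: "submod k M" and G: "\<forall>j<N. vecR k (G j)"
    and x: "inspan k N G M x" and y: "inspan k N G M y"
  shows "inspan k N G M (\<lambda>i. x i - y i)"
proof -
  have "inspan k N G M (\<lambda>i. y i * (- p))" using inspan_scale[OF M y, of "- p"] by simp
  then have "inspan k N G M (\<lambda>i. x i + (\<lambda>i. y i * (- p)) i)" using inspan_add[OF M x] by blast
  moreover have "\<forall>i<k. x i + y i * (- p) = x i - y i"
    using inspan_vec[OF M G y] Rr unfolding vecR_def by simp
  ultimately show ?thesis using inspan_cong by fastforce
qed

end


context idem begin

lemma sr_mono1:
  assumes sr: "sr_condition R p n"
  shows "sr_condition R p (Suc n)"
  unfolding sr_condition_def
proof (intro allI impI)
  fix a assume aR: "\<forall>i\<le>Suc n. a i \<in> R" and um: "right_unimodular R p a (Suc (Suc n))"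
  obtain x where xR: "\<forall>i<Suc (Suc n). x i \<in> R" and xs: "(\<Sum>i<Suc (Suc n). a i * x i) = p"
    using um unfolding right_unimodular_def by blast
  define b where "b = a n * x n + a (Suc n) * x (Suc n)"
  define a' where "a' = (\<lambda>i. if i < n then a i else b)"
  have bR: "b \<in> R" unfolding b_def using aR xR by simp
  have a'R: "\<forall>i\<le>n. a' i \<in> R" unfolding a'_def using aR bR by simp
  have s1: "(\<Sum>i<n. a i * x i) + b = p" using xs unfolding b_def by (simp add: add.assoc)
  have "(\<Sum>i<Suc n. a' i * (if i < n then x i else p)) = (\<Sum>i<n. a i * x i) + b * p"
    unfolding a'_def by simp
  also have "\<dots> = p" using s1 Rr[OF bR] by simp
  finally have "right_unimodular R p a' (Suc n)"
    unfolding right_unimodular_def using xR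
    by (intro exI[of _ "\<lambda>i. if i < n then x i else p"]) auto
  then have "reducible R p a' n" using sr a'R unfolding sr_condition_def by blast
  then obtain c y where cR: "\<forall>i<n. c i \<in> R" and yR: "\<forall>i<n. y i \<in> R"
    and cy: "(\<Sum>i<n. (a' i + a' n * c i) * y i) = p"
    unfolding reducible_def right_unimodular_def by blast
  have cy': "(\<Sum>i<n. (a i + b * c i) * y i) = p"
    using cy unfolding a'_def by simp
  define c' where "c' = (\<lambda>i. if i < n then x (Suc n) * c i else 0)"
  define y' where "y' = (\<lambda>i. if i < n then y i else (\<Sum>j<n. x n * c j * y j))"
  have "(\<Sum>i<Suc n. (a i + a (Suc n) * c' i) * y' i)
      = (\<Sum>i<n. (a i + a (Suc n) * (x (Suc n) * c i)) * y i) + a n * (\<Sum>j<n. x n * c j * y j)"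
    unfolding c'_def y'_def by simp
  also have "\<dots> = (\<Sum>i<n. (a i + a (Suc n) * (x (Suc n) * c i)) * y i + a n * (x n * c i * y i))"
    by (simp add: sum_distrib_left sum.distrib)
  also have "\<dots> = (\<Sum>i<n. (a i + b * c i) * y i)"
    unfolding b_def by (intro sum.cong) (simp_all add: algebra_simps)
  also have "\<dots> = p" by (rule cy')
  finally have eq: "(\<Sum>i<Suc n. (a i + a (Suc n) * c' i) * y' i) = p" .
  have sR: "(\<Sum>j<n. x n * c j * y j) \<in> R" using xR cR yR by (intro Rsum) auto
  have y'R: "\<forall>i<Suc n. y' i \<in> R" unfolding y'_def using yR sR by simp
  have "right_unimodular R p (\<lambda>i. a i + a (Suc n) * c' i) (Suc n)"
    unfolding right_unimodular_def using eq y'R by blast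
  moreover have "\<forall>i<Suc n. c' i \<in> R" unfolding c'_def using xR cR by simp
  ultimately show "reducible R p a (Suc n)" unfolding reducible_def by blast
qed

lemma sr_mono:
  assumes "sr_condition R p n" "n \<le> N"
  shows "sr_condition R p N"
  using assms(2)
proof (induction N)
  case 0 then show ?case using assms(1) by simp
next
  case (Suc N)
  then show ?case using assms(1) sr_mono1 le_Suc_eq by blast
qed

end


context idem begin

definition phi :: "(nat \<Rightarrow> 'a) \<Rightarrow> (nat \<Rightarrow> 'a) \<Rightarrow> (nat \<Rightarrow> 'a)" where
  "phi g x = (\<lambda>i. x (Suc i) - g (Suc i) * x 0)"

lemma phi_add: "phi g (\<lambda>i. x i + y i) = (\<lambda>i. phi g x i + phi g y i)"
  unfolding phi_def by (simp add: algebra_simps)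
lemma phi_scale: "phi g (\<lambda>i. x i * r) = (\<lambda>i. phi g x i * r)"
  unfolding phi_def by (simp add: algebra_simps)
lemma phi_zero: "phi g (\<lambda>_. 0) = (\<lambda>_. 0)"
  unfolding phi_def by simp
lemma phi_vec: "vecR (Suc k) g \<Longrightarrow> vecR (Suc k) x \<Longrightarrow> vecR k (phi g x)"
  unfolding phi_def vecR_def by simp

lemma phi_comb:
  "phi g (\<lambda>i. (\<Sum>j<N. G j i * \<alpha> j) + w i) = (\<lambda>i. (\<Sum>j<N. phi g (G j) i * \<alpha> j) + phi g w i)"
  unfolding phi_def
  by (rule ext) (simp add: sum_distrib_left sum_subtractf algebra_simps)

lemma submod_phi:
  assumes W: "submod (Suc k) W" and g: "vecR (Suc k) g"
  shows "submod k (phi g ` W)"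
  unfolding submod_def
proof (intro conjI ballI)
  fix x assume "x \<in> phi g ` W"
  then obtain w where "w \<in> W" "x = phi g w" by blast
  then show "vecR k x" using phi_vec[OF g] W unfolding submod_def by blast
next
  have "(\<lambda>_. 0) = phi g (\<lambda>_. 0)" using phi_zero by simp
  then show "(\<lambda>_. 0) \<in> phi g ` W" using submod_zero[OF W] by (rule image_eqI)
next
  fix x y assume "x \<in> phi g ` W" "y \<in> phi g ` W"
  then obtain w w' where ww: "w \<in> W" "x = phi g w" "w' \<in> W" "y = phi g w'" by blast
  have "(\<lambda>i. x i + y i) = phi g (\<lambda>i. w i + w' i)" using ww phi_add by simp
  then show "(\<lambda>i. x i + y i) \<in> phi g ` W" using submod_add[OF W ww(1) ww(3)] by (rule image_eqI)
next
  fix x r assume "x \<in> phi g ` W" "r \<in> R"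
  then obtain w where ww: "w \<in> W" "x = phi g w" by blast
  have "(\<lambda>i. x i * r) = phi g (\<lambda>i. w i * r)" using ww phi_scale by simp
  then show "(\<lambda>i. x i * r) \<in> phi g ` W" using submod_scale[OF W ww(1) \<open>r \<in> R\<close>] by (rule image_eqI)
qed

lemma phi_msum: "phi g ` msum W U \<subseteq> msum (phi g ` W) (phi g ` U)"
proof
  fix x assume "x \<in> phi g ` msum W U"
  then obtain y where y: "y \<in> msum W U" "x = phi g y" by blast
  obtain w u where wu: "y = (\<lambda>i. w i + u i)" "w \<in> W" "u \<in> U" using y(1) by (rule msumE)
  have "x = (\<lambda>i. phi g w i + phi g u i)" using y(2) wu(1) phi_add by simp
  moreover have "(\<lambda>i. phi g w i + phi g u i) \<in> msum (phi g ` W) (phi g ` U)"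
    using wu by (intro msumI) auto
  ultimately show "x \<in> msum (phi g ` W) (phi g ` U)" by simp
qed

lemma inspan_mono: "M \<subseteq> M' \<Longrightarrow> inspan k N G M x \<Longrightarrow> inspan k N G M' x"
  unfolding inspan_def by blast

lemma project:
  assumes g: "vecR (Suc k) g" and g0: "g 0 = p"
    and GM: "G M = g" and MM: "submod (Suc k) MM"
    and sp: "\<forall>x. vecR (Suc k) x \<longrightarrow> inspan (Suc k) (Suc M) G MM x"
  shows "\<forall>y. vecR k y \<longrightarrow> inspan k M (\<lambda>j. phi g (G j)) (phi g ` MM) y"
proof (intro allI impI)
  fix y assume y: "vecR k y"
  define x where "x = (\<lambda>i. if i = 0 then 0 else y (i - 1))"
  have "vecR (Suc k) x" using y unfolding vecR_def x_def
    by (auto simp: less_Suc_eq_0_disj)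
  then obtain \<alpha> w where a: "\<forall>j<Suc M. \<alpha> j \<in> R" "w \<in> MM"
    "\<forall>i<Suc k. x i = (\<Sum>j<Suc M. G j i * \<alpha> j) + w i"
    using sp unfolding inspan_def by blast
  have px: "phi g x = y" unfolding phi_def x_def by simp
  have "\<forall>i<k. phi g x i = phi g (\<lambda>i. (\<Sum>j<Suc M. G j i * \<alpha> j) + w i) i"
    using a(3) unfolding phi_def by simp
  then have e: "\<forall>i<k. y i = (\<Sum>j<Suc M. phi g (G j) i * \<alpha> j) + phi g w i"
    unfolding px phi_comb by simp
  have z: "\<forall>i<k. phi g (G M) i = 0"
    using g g0 GM Rr unfolding phi_def vecR_def by simp
  show "inspan k M (\<lambda>j. phi g (G j)) (phi g ` MM) y"
    unfolding inspan_def
  proof (rule exI[of _ \<alpha>], rule exI[of _ "phi g w"], intro conjI allI impI)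
    fix i assume "i < k"
    then show "y i = (\<Sum>j<M. phi g (G j) i * \<alpha> j) + phi g w i"
      using e z by simp
  qed (use a in auto)
qed

lemma lift:
  assumes g: "vecR (Suc k) g" and g0: "g 0 = p"
    and H: "\<forall>j<M. vecR (Suc k) (H j)" and W: "submod (Suc k) W"
    and sp: "\<forall>y. vecR k y \<longrightarrow> inspan k M (\<lambda>j. phi g (H j)) (phi g ` W) y"
  shows "\<forall>x. vecR (Suc k) x \<longrightarrow> inspan (Suc k) (Suc M) (\<lambda>j. if j < M then H j else g) W x"
proof (intro allI impI)
  fix x assume x: "vecR (Suc k) x"
  have "vecR k (phi g x)" using phi_vec[OF g x] .
  then have "inspan k M (\<lambda>j. phi g (H j)) (phi g ` W) (phi g x)" using sp by simp
  then obtain \<alpha> w' where a: "\<forall>j<M. \<alpha> j \<in> R" "w' \<in> phi g ` W"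
    "\<forall>i<k. phi g x i = (\<Sum>j<M. phi g (H j) i * \<alpha> j) + w' i"
    unfolding inspan_def by (elim exE conjE) (rule that)
  obtain w where w: "w \<in> W" "w' = phi g w" using a(2) by (elim imageE) (rule that)
  define z where "z = (\<lambda>i. (\<Sum>j<M. H j i * \<alpha> j) + w i)"
  have pz: "\<forall>i<k. phi g x i = phi g z i"
    using a(3) unfolding z_def phi_comb w(2) by simp
  have z0: "z 0 \<in> R" unfolding z_def using H a(1) submod_vec[OF W w(1)]
    unfolding vecR_def by (intro Radd Rsum) auto
  have x0: "x 0 \<in> R" using x unfolding vecR_def by simp
  define \<beta> where "\<beta> = x 0 - z 0"
  have bR: "\<beta> \<in> R" unfolding \<beta>_def using z0 x0 by simp
  have key: "\<forall>i<Suc k. x i = z i + g i * \<beta>"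
  proof (intro allI impI)
    fix i assume i: "i < Suc k"
    show "x i = z i + g i * \<beta>"
    proof (cases i)
      case 0
      then show ?thesis using g0 Rl[OF bR] unfolding \<beta>_def by simp
    next
      case (Suc i')
      then have "i' < k" using i by simp
      then have eq: "x (Suc i') - g (Suc i') * x 0 = z (Suc i') - g (Suc i') * z 0"
        using pz unfolding phi_def by simp
      have "x (Suc i') = (x (Suc i') - g (Suc i') * x 0) + g (Suc i') * x 0" by simp
      also have "\<dots> = (z (Suc i') - g (Suc i') * z 0) + g (Suc i') * x 0" by (simp only: eq)
      also have "\<dots> = z (Suc i') + g (Suc i') * (x 0 - z 0)" by (simp add: right_diff_distrib)
      finally show ?thesis unfolding Suc \<beta>_def .
    qed
  qed
  show "inspan (Suc k) (Suc M) (\<lambda>j. if j < M then H j else g) W x"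
    unfolding inspan_def
  proof (rule exI[of _ "\<lambda>j. if j < M then \<alpha> j else \<beta>"], rule exI[of _ w], intro conjI allI impI)
    fix i assume "i < Suc k"
    have "(\<Sum>j<Suc M. (if j < M then H j else g) i * (if j < M then \<alpha> j else \<beta>))
        = (\<Sum>j<M. H j i * \<alpha> j) + g i * \<beta>" by simp
    then show "x i = (\<Sum>j<Suc M. (if j < M then H j else g) i * (if j < M then \<alpha> j else \<beta>)) + w i"
      using key \<open>i < Suc k\<close> unfolding z_def by (simp add: add_ac)
  qed (use a(1) bR w(1) in auto)
qed

end


context idem begin

lemma inspan_gen_cong1:
  assumes "\<forall>j<N. \<forall>i<k. G j i = G' j i" and "inspan k N G M x"
  shows "inspan k N G' M x"
proof -
  obtain \<alpha> w where a: "\<forall>j<N. \<alpha> j \<in> R" "w \<in> M" "\<forall>i<k. x i = (\<Sum>j<N. G j i * \<alpha> j) + w i"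
    using assms(2) unfolding inspan_def by (elim exE conjE) (rule that)
  have "\<forall>i<k. (\<Sum>j<N. G j i * \<alpha> j) = (\<Sum>j<N. G' j i * \<alpha> j)"
    using assms(1) by (auto intro!: sum.cong)
  then have "\<forall>i<k. x i = (\<Sum>j<N. G' j i * \<alpha> j) + w i" using a(3) by simp
  then show ?thesis unfolding inspan_def using a(1,2) by blast
qed

lemma inspan_gen_cong:
  assumes "\<forall>j<N. \<forall>i<k. G j i = G' j i"
  shows "inspan k N G M x = inspan k N G' M x"
  using inspan_gen_cong1[OF assms] inspan_gen_cong1[of N k G' G] assms by auto

lemma stepA:
  assumes sr: "sr_condition R p n" and nN: "n \<le> N"
    and W: "submod (Suc k) W" and U: "submod (Suc k) U"
    and v: "\<forall>j<N. vecR (Suc k) (v j)"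
    and sp: "\<forall>x. vecR (Suc k) x \<longrightarrow> inspan (Suc k) N v (msum W U) x"
  obtains c u w s where "\<forall>j<N. c j \<in> R" "u \<in> U" "w \<in> W" "\<forall>j<N. s j \<in> R"
    "(\<Sum>j<N. (v j 0 + (w 0 + u 0) * c j) * s j) = p"
proof -
  define e where "e = (\<lambda>i::nat. if i = 0 then p else 0)"
  have "vecR (Suc k) e" unfolding vecR_def e_def by simp
  then have "inspan (Suc k) N v (msum W U) e" using sp by simp
  then obtain \<alpha> wu where a: "\<forall>j<N. \<alpha> j \<in> R" "wu \<in> msum W U"
    "\<forall>i<Suc k. e i = (\<Sum>j<N. v j i * \<alpha> j) + wu i"
    unfolding inspan_def by (elim exE conjE) (rule that)
  obtain w u where wu: "wu = (\<lambda>i. w i + u i)" "w \<in> W" "u \<in> U" using a(2) by (rule msumE)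
  have "e 0 = (\<Sum>j<N. v j 0 * \<alpha> j) + wu 0" using a(3) by simp
  then have e0: "p = (\<Sum>j<N. v j 0 * \<alpha> j) + (w 0 + u 0)" using wu(1) unfolding e_def by simp
  have bR: "w 0 + u 0 \<in> R" using submod_vec[OF W wu(2)] submod_vec[OF U wu(3)] by simp
  define a' where "a' = (\<lambda>j. if j < N then v j 0 else w 0 + u 0)"
  have a'R: "\<forall>j\<le>N. a' j \<in> R" unfolding a'_def using v bR unfolding vecR_def by simp
  have "(\<Sum>j<Suc N. a' j * (if j < N then \<alpha> j else p)) = (\<Sum>j<N. v j 0 * \<alpha> j) + (w 0 + u 0) * p"
    unfolding a'_def by simp
  also have "\<dots> = p" using e0 Rr[OF bR] by simp
  finally have eq: "(\<Sum>j<Suc N. a' j * (if j < N then \<alpha> j else p)) = p" .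
  have xR: "\<forall>j<Suc N. (if j < N then \<alpha> j else p) \<in> R" using a(1) by simp
  have "right_unimodular R p a' (Suc N)"
    unfolding right_unimodular_def by (intro exI[of _ "\<lambda>j. if j < N then \<alpha> j else p"] conjI xR eq)
  moreover have "sr_condition R p N" using sr_mono[OF sr nN] .
  ultimately have "reducible R p a' N" using a'R unfolding sr_condition_def by blast
  then obtain c where c: "\<forall>j<N. c j \<in> R"
    and ru: "right_unimodular R p (\<lambda>j. a' j + a' N * c j) N"
    unfolding reducible_def by (elim exE conjE) (rule that)
  then obtain s where s: "\<forall>j<N. s j \<in> R"
    and cs: "(\<Sum>j<N. (a' j + a' N * c j) * s j) = p"
    unfolding right_unimodular_def by (elim exE conjE) (rule that)
  have "(\<Sum>j<N. (v j 0 + (w 0 + u 0) * c j) * s j) = (\<Sum>j<N. (a' j + a' N * c j) * s j)"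
    unfolding a'_def by (intro sum.cong) auto
  then show ?thesis using that[OF c wu(3) wu(2) s] cs by simp
qed

end


context idem begin

lemma stepB:
  assumes sr: "sr_condition R p n" and nM: "n \<le> M"
    and IH: "\<And>v W U. (\<forall>j<M. vecR (Suc k) (v j)) \<Longrightarrow> submod (Suc k) W \<Longrightarrow> submod (Suc k) U \<Longrightarrow>
       (\<forall>x. vecR (Suc k) x \<longrightarrow> inspan (Suc k) M v (msum W U) x) \<Longrightarrow>
       \<exists>\<mu>. (\<forall>j<M. \<mu> j \<in> U) \<and> (\<forall>x. vecR (Suc k) x \<longrightarrow> inspan (Suc k) M (\<lambda>j i. v j i + \<mu> j i) W x)"
    and W: "submod (Suc (Suc k)) W" and U: "submod (Suc (Suc k)) U"
    and v: "\<forall>j<Suc M. vecR (Suc (Suc k)) (v j)"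
    and sR: "\<forall>j<Suc M. s j \<in> R" and s: "(\<Sum>j<Suc M. v j 0 * s j) = p"
    and sp: "\<forall>x. vecR (Suc (Suc k)) x \<longrightarrow> inspan (Suc (Suc k)) (Suc M) v (msum W U) x"
  shows "\<exists>\<mu>. (\<forall>j<Suc M. \<mu> j \<in> U) \<and>
    (\<forall>x. vecR (Suc (Suc k)) x \<longrightarrow> inspan (Suc (Suc k)) (Suc M) (\<lambda>j i. v j i + \<mu> j i) W x)"
proof -
  let ?K = "Suc (Suc k)"
  have v0R: "\<forall>j<Suc M. v j 0 \<in> R" using v unfolding vecR_def by simp
  have "right_unimodular R p (\<lambda>j. v j 0) (Suc M)"
    unfolding right_unimodular_def by (intro exI[of _ s] conjI sR s)
  moreover have "sr_condition R p M" using sr_mono[OF sr nM] .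
  ultimately have "reducible R p (\<lambda>j. v j 0) M" using v0R unfolding sr_condition_def by simp
  then obtain d where dR: "\<forall>j<M. d j \<in> R"
    and ru: "right_unimodular R p (\<lambda>j. v j 0 + v M 0 * d j) M"
    unfolding reducible_def by (elim exE conjE) (rule that)
  then obtain s' where s'R: "\<forall>j<M. s' j \<in> R"
    and s': "(\<Sum>j<M. (v j 0 + v M 0 * d j) * s' j) = p"
    unfolding right_unimodular_def by (elim exE conjE) (rule that)
  define G where "G = (\<lambda>j i. v j i + v M i * d j)"
  define t where "t = (\<lambda>j. s' j * (p - v M 0))"
  define g where "g = (\<lambda>i. v M i + (\<Sum>j<M. G j i * t j))"
  define Gf where "Gf = (\<lambda>j. if j < M then G j else g)"
  have vM0: "v M 0 \<in> R" using v0R by simp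
  have tR: "\<forall>j<M. t j \<in> R" unfolding t_def using s'R vM0 by simp
  have Gvec: "\<forall>j<M. vecR ?K (G j)" unfolding G_def vecR_def using v dR
    unfolding vecR_def by simp
  have gvec: "vecR ?K g" unfolding g_def vecR_def
  proof (intro allI impI)
    fix i assume i: "i < ?K"
    have "(\<Sum>j<M. G j i * t j) \<in> R" using Gvec tR i unfolding vecR_def by (intro Rsum) auto
    then show "v M i + (\<Sum>j<M. G j i * t j) \<in> R" using v i unfolding vecR_def by simp
  qed
  have g0: "g 0 = p"
  proof -
    have "(\<Sum>j<M. G j 0 * t j) = (\<Sum>j<M. G j 0 * s' j) * (p - v M 0)"
      unfolding t_def by (simp add: sum_distrib_right mult.assoc)
    also have "(\<Sum>j<M. G j 0 * s' j) = p" using s' unfolding G_def by simp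
    also have "p * (p - v M 0) = p - v M 0" using Rl[OF vM0] idem by (simp add: right_diff_distrib)
    finally show ?thesis unfolding g_def by simp
  qed
  have Gfvec: "\<forall>j<Suc M. vecR ?K (Gf j)" unfolding Gf_def using Gvec gvec by simp
  have WU: "submod ?K (msum W U)" using submod_msum[OF W U] .
  have gen: "\<And>j. j < Suc M \<Longrightarrow> inspan ?K (Suc M) Gf (msum W U) (Gf j)"
    using inspan_gen Gfvec WU by blast
  have vM_in: "inspan ?K (Suc M) Gf (msum W U) (v M)"
  proof -
    have "\<forall>j\<in>{..<M}. inspan ?K (Suc M) Gf (msum W U) (\<lambda>i. Gf j i * t j)"
      using gen tR inspan_scale[OF WU] by simp
    then have "inspan ?K (Suc M) Gf (msum W U) (\<lambda>i. \<Sum>j<M. Gf j i * t j)"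
      using inspan_sum[OF WU, of "{..<M}"] by simp
    then have "inspan ?K (Suc M) Gf (msum W U) (\<lambda>i. Gf M i - (\<Sum>j<M. Gf j i * t j))"
      using inspan_diff[OF WU Gfvec gen[of M]] by simp
    moreover have "\<forall>i<?K. Gf M i - (\<Sum>j<M. Gf j i * t j) = v M i"
      unfolding Gf_def g_def by simp
    ultimately show ?thesis using inspan_cong by blast
  qed
  have v_in: "\<forall>j<Suc M. inspan ?K (Suc M) Gf (msum W U) (v j)"
  proof (intro allI impI)
    fix j assume j: "j < Suc M"
    show "inspan ?K (Suc M) Gf (msum W U) (v j)"
    proof (cases "j < M")
      case True
      have "inspan ?K (Suc M) Gf (msum W U) (\<lambda>i. v M i * d j)"
        using inspan_scale[OF WU vM_in] dR True by simp
      then have "inspan ?K (Suc M) Gf (msum W U) (\<lambda>i. Gf j i - v M i * d j)"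
        using inspan_diff[OF WU Gfvec gen[of j]] True by simp
      moreover have "\<forall>i<?K. Gf j i - v M i * d j = v j i"
        unfolding Gf_def G_def using True by simp
      ultimately show ?thesis using inspan_cong by blast
    next
      case False
      then have "j = M" using j by simp
      then show ?thesis using vM_in by simp
    qed
  qed
  have spG: "\<forall>x. vecR ?K x \<longrightarrow> inspan ?K (Suc M) Gf (msum W U) x"
    using inspan_trans[OF WU v_in] sp by blast
  have phiGvec: "\<forall>j<M. vecR (Suc k) (phi g (Gf j))"
    using phi_vec[OF gvec] Gfvec by simp
  have spIH: "\<forall>y. vecR (Suc k) y \<longrightarrow> inspan (Suc k) M (\<lambda>j. phi g (Gf j)) (msum (phi g ` W) (phi g ` U)) y"
  proof (intro allI impI)
    fix y assume "vecR (Suc k) y"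
    then have "inspan (Suc k) M (\<lambda>j. phi g (Gf j)) (phi g ` msum W U) y"
      using project[OF gvec g0 _ WU spG] unfolding Gf_def by simp
    then show "inspan (Suc k) M (\<lambda>j. phi g (Gf j)) (msum (phi g ` W) (phi g ` U)) y"
      using inspan_mono[OF phi_msum] by blast
  qed
  obtain \<mu>' where \<mu>'U: "\<forall>j<M. \<mu>' j \<in> phi g ` U"
    and \<mu>'sp: "\<forall>y. vecR (Suc k) y \<longrightarrow> inspan (Suc k) M (\<lambda>j i. phi g (Gf j) i + \<mu>' j i) (phi g ` W) y"
    using IH[OF phiGvec submod_phi[OF W gvec] submod_phi[OF U gvec] spIH] by (elim exE conjE) (rule that)
  have "\<forall>j\<in>{..<M}. \<exists>u. u \<in> U \<and> \<mu>' j = phi g u" using \<mu>'U by (auto simp: image_iff)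
  from bchoice[OF this] obtain ut where ut: "\<forall>j\<in>{..<M}. ut j \<in> U \<and> \<mu>' j = phi g (ut j)"
    by (elim exE) (rule that)
  define H where "H = (\<lambda>j i. G j i + ut j i)"
  have Hvec: "\<forall>j<M. vecR ?K (H j)" unfolding H_def vecR_def using Gvec ut submod_vec[OF U]
    unfolding vecR_def by simp
  have spH0: "\<forall>y. vecR (Suc k) y \<longrightarrow> inspan (Suc k) M (\<lambda>j. phi g (H j)) (phi g ` W) y"
  proof -
    have eqs: "\<forall>j<M. \<forall>i<Suc k. phi g (Gf j) i + \<mu>' j i = phi g (H j) i"
      unfolding H_def Gf_def using ut by (simp add: phi_add)
    have "\<And>y. inspan (Suc k) M (\<lambda>j i. phi g (Gf j) i + \<mu>' j i) (phi g ` W) y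
       = inspan (Suc k) M (\<lambda>j. phi g (H j)) (phi g ` W) y"
      by (rule inspan_gen_cong) (use eqs in simp)
    then show ?thesis using \<mu>'sp by simp
  qed
  have spH: "\<forall>x. vecR ?K x \<longrightarrow> inspan ?K (Suc M) (\<lambda>j. if j < M then H j else g) W x"
    by (rule lift[OF gvec g0 Hvec W spH0])
  define mM where "mM = (\<lambda>i. \<Sum>j<M. ut j i * (- t j))"
  define mu where "mu = (\<lambda>j. if j < M then (\<lambda>i. ut j i + mM i * (- d j)) else mM)"
  have mMU: "mM \<in> U" unfolding mM_def using submod_sum[OF U, of "{..<M}" ut "\<lambda>j. - t j"] ut tR by simp
  have muU: "\<forall>j<Suc M. mu j \<in> U"
  proof (intro allI impI)
    fix j assume "j < Suc M"
    show "mu j \<in> U"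
    proof (cases "j < M")
      case True
      have "(\<lambda>i. mM i * (- d j)) \<in> U" by (rule submod_scale[OF U mMU]) (use dR True in simp)
      then have "(\<lambda>i. ut j i + (\<lambda>i. mM i * (- d j)) i) \<in> U"
        by (intro submod_add[OF U]) (use ut True in auto)
      then show ?thesis unfolding mu_def using True by simp
    next
      case False then show ?thesis unfolding mu_def using mMU by simp
    qed
  qed
  define F where "F = (\<lambda>j i. v j i + mu j i)"
  have Fvec: "\<forall>j<Suc M. vecR ?K (F j)" unfolding F_def vecR_def using v muU submod_vec[OF U]
    unfolding vecR_def by simp
  have genF: "\<And>j. j < Suc M \<Longrightarrow> inspan ?K (Suc M) F W (F j)"
    using inspan_gen Fvec W by blast
  have H_in: "\<forall>j<M. inspan ?K (Suc M) F W (H j)"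
  proof (intro allI impI)
    fix j assume j: "j < M"
    have "inspan ?K (Suc M) F W (\<lambda>i. F M i * d j)" using inspan_scale[OF W genF[of M]] dR j by simp
    then have "inspan ?K (Suc M) F W (\<lambda>i. F j i + (\<lambda>i. F M i * d j) i)"
      using inspan_add[OF W genF[of j]] j by simp
    moreover have "\<forall>i<?K. F j i + F M i * d j = H j i"
      unfolding F_def H_def mu_def G_def using j by (simp add: algebra_simps)
    ultimately show "inspan ?K (Suc M) F W (H j)" using inspan_cong by blast
  qed
  have g_in: "inspan ?K (Suc M) F W g"
  proof -
    have "\<forall>j\<in>{..<M}. inspan ?K (Suc M) F W (\<lambda>i. H j i * t j)"
      using H_in tR inspan_scale[OF W] by simp
    then have "inspan ?K (Suc M) F W (\<lambda>i. \<Sum>j<M. H j i * t j)"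
      using inspan_sum[OF W, of "{..<M}"] by simp
    then have "inspan ?K (Suc M) F W (\<lambda>i. F M i + (\<lambda>i. \<Sum>j<M. H j i * t j) i)"
      using inspan_add[OF W genF[of M]] by simp
    moreover have "\<forall>i<?K. F M i + (\<Sum>j<M. H j i * t j) = g i"
    proof (intro allI impI)
      fix i
      have "(\<Sum>j<M. H j i * t j) = (\<Sum>j<M. G j i * t j) + (\<Sum>j<M. ut j i * t j)"
        unfolding H_def by (simp add: distrib_right sum.distrib)
      moreover have "mM i = - (\<Sum>j<M. ut j i * t j)"
        unfolding mM_def by (simp add: sum_negf)
      ultimately show "F M i + (\<Sum>j<M. H j i * t j) = g i"
        unfolding F_def mu_def g_def by simp
    qed
    ultimately show ?thesis using inspan_cong by blast
  qed
  have all_in: "\<forall>j<Suc M. inspan ?K (Suc M) F W ((\<lambda>j. if j < M then H j else g) j)"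
    using H_in g_in by simp
  have "\<forall>x. vecR ?K x \<longrightarrow> inspan ?K (Suc M) F W x"
    using inspan_trans[OF W all_in] spH by blast
  then show ?thesis using muU unfolding F_def by blast
qed

end


context idem begin

lemma T_main:
  assumes sr: "sr_condition R p n"
  shows "n + k \<le> Suc N \<Longrightarrow> (\<forall>j<N. vecR k (v j)) \<Longrightarrow> submod k W \<Longrightarrow> submod k U \<Longrightarrow>
    (\<forall>x. vecR k x \<longrightarrow> inspan k N v (msum W U) x) \<Longrightarrow>
    \<exists>\<mu>. (\<forall>j<N. \<mu> j \<in> U) \<and> (\<forall>x. vecR k x \<longrightarrow> inspan k N (\<lambda>j i. v j i + \<mu> j i) W x)"
proof (induction k arbitrary: N v W U)
  case 0
  have zU: "(\<lambda>_. 0) \<in> U" using submod_zero[OF 0(4)] .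
  have zW: "(\<lambda>_. 0) \<in> W" using submod_zero[OF 0(3)] .
  have "\<forall>x. vecR 0 x \<longrightarrow> inspan 0 N (\<lambda>j i. v j i + (\<lambda>j. (\<lambda>_. 0)) j i) W x"
    unfolding inspan_def using zW by (intro allI impI exI[of _ "\<lambda>_. 0"] conjI) auto
  then show ?case using zU by (intro exI[of _ "\<lambda>j. (\<lambda>_. 0)"] conjI) auto
next
  case (Suc k)
  note nk = Suc.prems(1) and v = Suc.prems(2) and W = Suc.prems(3) and U = Suc.prems(4)
    and sp = Suc.prems(5)
  have nN: "n \<le> N" using nk by simp
  obtain c u w s where cR: "\<forall>j<N. c j \<in> R" and u: "u \<in> U" and w: "w \<in> W"
    and sR: "\<forall>j<N. s j \<in> R" and cs: "(\<Sum>j<N. (v j 0 + (w 0 + u 0) * c j) * s j) = p"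
    by (rule stepA[OF sr nN W U v sp])
  define \<mu>A where "\<mu>A = (\<lambda>j i. u i * c j)"
  define wA where "wA = (\<lambda>j i. w i * c j)"
  define v' where "v' = (\<lambda>j i. v j i + \<mu>A j i + wA j i)"
  have \<mu>AU: "\<forall>j<N. \<mu>A j \<in> U" unfolding \<mu>A_def using submod_scale[OF U u] cR by simp
  have wAW: "\<forall>j<N. wA j \<in> W" unfolding wA_def using submod_scale[OF W w] cR by simp
  have v'vec: "\<forall>j<N. vecR (Suc k) (v' j)"
    unfolding v'_def \<mu>A_def wA_def vecR_def
    using v cR submod_vec[OF U u] submod_vec[OF W w] unfolding vecR_def by simp
  have v'0: "(\<Sum>j<N. v' j 0 * s j) = p"
  proof -
    have "(\<Sum>j<N. v' j 0 * s j) = (\<Sum>j<N. (v j 0 + (w 0 + u 0) * c j) * s j)"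
      unfolding v'_def \<mu>A_def wA_def by (intro sum.cong) (simp_all add: algebra_simps)
    then show ?thesis using cs by simp
  qed
  have WU: "submod (Suc k) (msum W U)" using submod_msum[OF W U] .
  have v_in: "\<forall>j<N. inspan (Suc k) N v' (msum W U) (v j)"
  proof (intro allI impI)
    fix j assume j: "j < N"
    have "(\<lambda>i. w i + u i) \<in> msum W U" using msumI[OF w u] .
    then have m: "(\<lambda>i. (\<lambda>i. w i + u i) i * (- c j)) \<in> msum W U"
      by (rule submod_scale[OF WU]) (use cR j in simp)
    have "inspan (Suc k) N v' (msum W U) (\<lambda>i. v' j i + (\<lambda>i. (\<lambda>i. w i + u i) i * (- c j)) i)"
      by (rule inspan_add[OF WU inspan_gen[OF j] inspan_M[OF m]]) (use v'vec j WU in simp_all)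
    moreover have "\<forall>i<Suc k. v' j i + (\<lambda>i. (\<lambda>i. w i + u i) i * (- c j)) i = v j i"
      unfolding v'_def \<mu>A_def wA_def by (simp add: algebra_simps)
    ultimately show "inspan (Suc k) N v' (msum W U) (v j)" using inspan_cong by blast
  qed
  have sp': "\<forall>x. vecR (Suc k) x \<longrightarrow> inspan (Suc k) N v' (msum W U) x"
    using inspan_trans[OF WU v_in] sp by blast
  have backl: "\<exists>\<mu>. (\<forall>j<N. \<mu> j \<in> U) \<and> (\<forall>x. vecR (Suc k) x \<longrightarrow> inspan (Suc k) N (\<lambda>j i. v j i + \<mu> j i) W x)"
    if \<mu>'U: "\<forall>j<N. \<mu>' j \<in> U"
    and \<mu>'sp: "\<forall>x. vecR (Suc k) x \<longrightarrow> inspan (Suc k) N (\<lambda>j i. v' j i + \<mu>' j i) W x" for \<mu>'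
  proof -
    define \<mu> where "\<mu> = (\<lambda>j i. \<mu>A j i + \<mu>' j i)"
    have \<mu>U: "\<forall>j<N. \<mu> j \<in> U" unfolding \<mu>_def using \<mu>AU \<mu>'U submod_add[OF U] by simp
    have \<mu>vec: "\<forall>j<N. vecR (Suc k) (\<lambda>i. v j i + \<mu> j i)"
      using v \<mu>U submod_vec[OF U] unfolding vecR_def by simp
    have F_in: "\<forall>j<N. inspan (Suc k) N (\<lambda>j i. v j i + \<mu> j i) W (\<lambda>i. v' j i + \<mu>' j i)"
    proof (intro allI impI)
      fix j assume j: "j < N"
      have "inspan (Suc k) N (\<lambda>j i. v j i + \<mu> j i) W (\<lambda>i. (\<lambda>j i. v j i + \<mu> j i) j i + wA j i)"
        by (rule inspan_add[OF W inspan_gen[OF j] inspan_M]) (use \<mu>vec j W wAW in simp_all)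
      moreover have "\<forall>i<Suc k. (\<lambda>j i. v j i + \<mu> j i) j i + wA j i = v' j i + \<mu>' j i"
        unfolding v'_def \<mu>_def by (simp add: algebra_simps)
      ultimately show "inspan (Suc k) N (\<lambda>j i. v j i + \<mu> j i) W (\<lambda>i. v' j i + \<mu>' j i)"
        by (rule inspan_cong)
    qed
    have "\<forall>x. vecR (Suc k) x \<longrightarrow> inspan (Suc k) N (\<lambda>j i. v j i + \<mu> j i) W x"
      using inspan_trans[OF W F_in] \<mu>'sp by blast
    then show ?thesis using \<mu>U by blast
  qed
  show ?case
  proof (cases k)
    case 0
    have zU: "\<forall>j<N. (\<lambda>_. 0) \<in> U" using submod_zero[OF U] by simp
    have "\<forall>x. vecR (Suc k) x \<longrightarrow> inspan (Suc k) N (\<lambda>j i. v' j i + (\<lambda>j. (\<lambda>_. 0)) j i) W x"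
    proof (intro allI impI)
      fix x assume x: "vecR (Suc k) x"
      have x0: "x 0 \<in> R" using x unfolding vecR_def by simp
      have "(\<Sum>j<N. v' j 0 * (s j * x 0)) = (\<Sum>j<N. v' j 0 * s j) * x 0"
        by (simp add: sum_distrib_right mult.assoc)
      also have "\<dots> = x 0" using v'0 Rl[OF x0] by simp
      finally have e: "x 0 = (\<Sum>j<N. (v' j 0 + 0) * (s j * x 0)) + 0" by simp
      show "inspan (Suc k) N (\<lambda>j i. v' j i + (\<lambda>j. (\<lambda>_. 0)) j i) W x"
        unfolding inspan_def
      proof (rule exI[of _ "\<lambda>j. s j * x 0"], rule exI[of _ "\<lambda>_. 0"], intro conjI allI impI)
        fix i assume "i < Suc k"
        then have "i = 0" using 0 by simp
        then show "x i = (\<Sum>j<N. (v' j i + (\<lambda>j. (\<lambda>_. 0)) j i) * (s j * x 0)) + 0" using e by simp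
      qed (use sR x0 submod_zero[OF W] in auto)
    qed
    with zU show ?thesis by (rule backl[of "\<lambda>j _. 0"])
  next
    case (Suc k')
    then obtain M where NM: "N = Suc M" using nk by (cases N) auto
    have nM: "n \<le> M" using nk NM Suc by simp
    have IH: "\<And>v W U. (\<forall>j<M. vecR (Suc k') (v j)) \<Longrightarrow> submod (Suc k') W \<Longrightarrow> submod (Suc k') U \<Longrightarrow>
       (\<forall>x. vecR (Suc k') x \<longrightarrow> inspan (Suc k') M v (msum W U) x) \<Longrightarrow>
       \<exists>\<mu>. (\<forall>j<M. \<mu> j \<in> U) \<and> (\<forall>x. vecR (Suc k') x \<longrightarrow> inspan (Suc k') M (\<lambda>j i. v j i + \<mu> j i) W x)"
      using Suc.IH[of M] nk NM Suc by simp
    have "\<exists>\<mu>. (\<forall>j<Suc M. \<mu> j \<in> U) \<and>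
      (\<forall>x. vecR (Suc (Suc k')) x \<longrightarrow> inspan (Suc (Suc k')) (Suc M) (\<lambda>j i. v' j i + \<mu> j i) W x)"
      by (rule stepB[OF sr nM IH]) (use W U v'vec sR v'0 sp' NM Suc in simp_all)
    then show ?thesis using backl NM Suc by blast
  qed
qed

end


locale app = idem +
  fixes a b :: "nat \<Rightarrow> 'a" and n m :: nat and xa yb :: "nat \<Rightarrow> 'a"
  assumes n1: "1 \<le> n" and ab: "(\<Sum>i<Suc n. a i * b i) = 1"
    and full: "(\<Sum>l<m. xa l * p * yb l) = 1"
begin

definition u where "u l = xa l * p"
definition w where "w l = p * yb l"
definition iota where "iota y = (\<lambda>l. w l * y * p)"
definition V where "V j = (if j < m then (\<lambda>l. iota (a 0 * u j) l + (if l = j then p else 0) - iota (u j) l)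
   else iota (a (j - m + 1) * p))"
definition WW where "WW = {iota (\<Sum>i\<in>{1..<n}. a i * (1 - p) * z i) | z. True}"
definition UU where "UU = {iota (a n * z) | z. True}"

lemma pp[simp]: "p * (p * x) = p * x" by (metis idem mult.assoc)
lemma up[simp]: "u l * p = u l" unfolding u_def by (simp add: mult.assoc idem)
lemma up2[simp]: "u l * (p * x) = u l * x" unfolding u_def by (simp add: mult.assoc)
lemma pw[simp]: "p * w l = w l" unfolding w_def by simp

lemma uw: "(\<Sum>l<m. u l * w l) = 1"
  unfolding u_def w_def using full by (simp add: mult.assoc)

lemma iota_R: "iota y l \<in> R"
proof -
  have "iota y l = p * (yb l * y) * p" unfolding iota_def w_def by (simp add: mult.assoc)
  then show ?thesis using RI by simp
qed

lemma iota_vec: "vecR k (iota y)" unfolding vecR_def using iota_R by simp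

lemma iota_add: "iota (y + y') = (\<lambda>l. iota y l + iota y' l)"
  unfolding iota_def by (simp add: algebra_simps)
lemma iota_diff: "iota (y - y') = (\<lambda>l. iota y l - iota y' l)"
  unfolding iota_def by (simp add: algebra_simps)
lemma iota_zero: "iota 0 = (\<lambda>_. 0)"
  unfolding iota_def by simp
lemma iota_p: "iota (y * p) = iota y"
  unfolding iota_def by (simp add: mult.assoc idem)
lemma iota_scale: "r \<in> R \<Longrightarrow> (\<lambda>l. iota y l * r) = iota (y * p * r)"
  unfolding iota_def using Rr by (simp add: mult.assoc)
lemma iota_sum: "iota (\<Sum>i\<in>F. f i) = (\<lambda>l. \<Sum>i\<in>F. iota (f i) l)"
  unfolding iota_def by (simp add: sum_distrib_left sum_distrib_right)

lemma WW_submod: "submod m WW"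
  unfolding submod_def
proof (intro conjI ballI)
  fix x assume "x \<in> WW" then show "vecR m x" unfolding WW_def using iota_vec by auto
next
  show "(\<lambda>_. 0) \<in> WW" unfolding WW_def
    by (intro CollectI exI[of _ "\<lambda>_. 0"] conjI TrueI) (simp add: iota_zero)
next
  fix x y assume "x \<in> WW" "y \<in> WW"
  then obtain z z' where "x = iota (\<Sum>i\<in>{1..<n}. a i * (1 - p) * z i)"
    "y = iota (\<Sum>i\<in>{1..<n}. a i * (1 - p) * z' i)" unfolding WW_def by blast
  then have eq: "(\<lambda>i. x i + y i) = iota (\<Sum>i\<in>{1..<n}. a i * (1 - p) * (\<lambda>i. z i + z' i) i)"
    by (simp add: iota_add distrib_left sum.distrib)
  show "(\<lambda>i. x i + y i) \<in> WW" unfolding WW_def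
    by (intro CollectI exI[of _ "\<lambda>i. z i + z' i"] conjI TrueI eq)
next
  fix x r assume "x \<in> WW" "r \<in> R"
  then obtain z where "x = iota (\<Sum>i\<in>{1..<n}. a i * (1 - p) * z i)" unfolding WW_def by blast
  then have eq: "(\<lambda>i. x i * r) = iota (\<Sum>i\<in>{1..<n}. a i * (1 - p) * (\<lambda>i. z i * p * r) i)"
    using iota_scale[OF \<open>r\<in>R\<close>] by (simp add: sum_distrib_right mult.assoc)
  show "(\<lambda>i. x i * r) \<in> WW" unfolding WW_def
    by (intro CollectI exI[of _ "\<lambda>i. z i * p * r"] conjI TrueI eq)
qed

lemma UU_submod: "submod m UU"
  unfolding submod_def
proof (intro conjI ballI)
  fix x assume "x \<in> UU" then show "vecR m x" unfolding UU_def using iota_vec by auto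
next
  have "(\<lambda>_. 0) = iota (a n * 0)" using iota_zero by simp
  then show "(\<lambda>_. 0) \<in> UU" unfolding UU_def by blast
next
  fix x y assume "x \<in> UU" "y \<in> UU"
  then obtain z z' where "x = iota (a n * z)" "y = iota (a n * z')" unfolding UU_def by blast
  then have "(\<lambda>i. x i + y i) = iota (a n * (z + z'))"
    by (simp add: iota_add distrib_left)
  then show "(\<lambda>i. x i + y i) \<in> UU" unfolding UU_def by blast
next
  fix x r assume "x \<in> UU" "r \<in> R"
  then obtain z where "x = iota (a n * z)" unfolding UU_def by blast
  then have "(\<lambda>i. x i * r) = iota (a n * (z * p * r))"
    using iota_scale[OF \<open>r\<in>R\<close>] by (simp add: mult.assoc)
  then show "(\<lambda>i. x i * r) \<in> UU" unfolding UU_def by blast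
qed

end


lemma sum_split0n:
  fixes f :: "nat \<Rightarrow> 'b::comm_monoid_add"
  assumes "1 \<le> n"
  shows "(\<Sum>i<Suc n. f i) = f 0 + (\<Sum>i\<in>{1..<n}. f i) + f n"
proof -
  have "(\<Sum>i<n. f i) = f 0 + (\<Sum>i\<in>{1..<n}. f i)"
    using assms by (simp add: lessThan_atLeast0 sum.atLeast_Suc_lessThan)
  then show ?thesis by simp
qed

context app begin

definition rho where "rho x = (\<Sum>j<m. u j * x j)"

lemma V_vec: "vecR m (V j)"
  unfolding vecR_def V_def using iota_R by auto

lemma claimA:
  assumes x: "vecR m x" and l: "l < m"
  shows "(\<Sum>j<m. V j l * x j) = iota (a 0 * rho x) l + x l - iota (rho x) l"
proof -
  have px: "\<And>j. j < m \<Longrightarrow> p * x j = x j" "\<And>j. j < m \<Longrightarrow> x j * p = x j"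
    using x Rl Rr unfolding vecR_def by auto
  have "(\<Sum>j<m. V j l * x j) = (\<Sum>j<m. w l * a 0 * (u j * x j) + (if l = j then x j else 0) - w l * (u j * x j))"
  proof (intro sum.cong refl)
    fix j assume j: "j \<in> {..<m}"
    then have "V j l * x j = (w l * (a 0 * u j) * p + (if l = j then p else 0) - w l * u j * p) * x j"
      unfolding V_def iota_def by simp
    also have "\<dots> = w l * a 0 * (u j * x j) + (if l = j then x j else 0) - w l * (u j * x j)"
      using px j by (simp add: algebra_simps)
    finally show "V j l * x j = w l * a 0 * (u j * x j) + (if l = j then x j else 0) - w l * (u j * x j)" .
  qed
  also have "\<dots> = w l * a 0 * rho x + x l - w l * rho x"
    unfolding rho_def using l by (simp add: sum.distrib sum_subtractf sum_distrib_left)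
  also have "rho x * p = rho x" unfolding rho_def using px by (simp add: sum_distrib_right mult.assoc)
  then have "w l * a 0 * rho x + x l - w l * rho x = iota (a 0 * rho x) l + x l - iota (rho x) l"
    unfolding iota_def by (simp add: mult.assoc)
  finally show ?thesis .
qed

lemma rho_iota: "rho (iota y) = y * p"
proof -
  have "rho (iota y) = (\<Sum>j<m. u j * w j) * y * p"
    unfolding rho_def iota_def by (simp add: sum_distrib_right mult.assoc)
  then show ?thesis using uw by simp
qed

end


context app begin

abbreviation "NN \<equiv> m + (n - 1)"
abbreviation "WU \<equiv> msum WW UU"

lemma WU_submod: "submod m WU" using submod_msum[OF WW_submod UU_submod] .

lemma genV: "j < NN \<Longrightarrow> inspan m NN V WU (V j)"
  using inspan_gen V_vec WU_submod by blast

lemma S1: "vecR m x \<Longrightarrow> inspan m NN V WU (\<lambda>l. \<Sum>j<m. V j l * x j)"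
proof -
  assume x: "vecR m x"
  have "\<forall>j\<in>{..<m}. inspan m NN V WU (\<lambda>l. V j l * x j)"
    using genV inspan_scale[OF WU_submod] x unfolding vecR_def by auto
  then show ?thesis using inspan_sum[OF WU_submod, of "{..<m}"] by simp
qed

lemma S2: "inspan m NN V WU (iota y)"
proof -
  define x' where "x' = iota (b 0 * y)"
  have x'v: "vecR m x'" unfolding x'_def using iota_vec .
  have rx: "rho x' = b 0 * y * p" unfolding x'_def rho_iota ..
  have part0: "\<forall>l<m. (\<Sum>j<m. V j l * x' j) = iota (a 0 * b 0 * y) l"
  proof (intro allI impI)
    fix l assume l: "l < m"
    have "(\<Sum>j<m. V j l * x' j) = iota (a 0 * rho x') l + x' l - iota (rho x') l"
      using claimA[OF x'v l] .
    also have "iota (a 0 * rho x') = iota (a 0 * b 0 * y)" unfolding rx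
      using iota_p[of "a 0 * b 0 * y"] by (simp add: mult.assoc)
    also have "iota (rho x') = x'" by (simp only: rx, simp only: x'_def iota_p)
    finally show "(\<Sum>j<m. V j l * x' j) = iota (a 0 * b 0 * y) l" by simp
  qed
  have P0: "inspan m NN V WU (iota (a 0 * b 0 * y))"
    using S1[OF x'v] part0 inspan_cong by blast
  have Pi: "\<forall>i\<in>{1..<n}. inspan m NN V WU (iota (a i * p * b i * y))"
  proof
    fix i assume i: "i \<in> {1..<n}"
    then have j: "m + i - 1 < NN" by auto
    have "V (m + i - 1) = iota (a i * p)" unfolding V_def using i by auto
    then have "(\<lambda>l. V (m + i - 1) l * (p * b i * y * p)) = iota (a i * p * p * (p * b i * y * p))"
      using iota_scale[OF RI[of "b i * y"]] by (simp add: mult.assoc)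
    also have "\<dots> = iota (a i * p * b i * y)"
      using iota_p[of "a i * p * b i * y"] by (simp add: mult.assoc idem)
    finally have eq: "(\<lambda>l. V (m + i - 1) l * (p * b i * y * p)) = iota (a i * p * b i * y)" .
    have "inspan m NN V WU (\<lambda>l. V (m + i - 1) l * (p * b i * y * p))"
      using inspan_scale[OF WU_submod genV[OF j]] RI[of "b i * y"] by (simp add: mult.assoc)
    then show "inspan m NN V WU (iota (a i * p * b i * y))" unfolding eq .
  qed
  have PS: "inspan m NN V WU (\<lambda>l. \<Sum>i\<in>{1..<n}. iota (a i * p * b i * y) l)"
    using inspan_sum[OF WU_submod, of "{1..<n}"] Pi by simp
  define wu where "wu = (\<lambda>l. iota (\<Sum>i\<in>{1..<n}. a i * (1 - p) * (\<lambda>i. b i * y) i) l + iota (a n * (b n * y)) l)"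
  have w1: "iota (\<Sum>i\<in>{1..<n}. a i * (1 - p) * (\<lambda>i. b i * y) i) \<in> WW" unfolding WW_def
    by (intro CollectI exI[of _ "\<lambda>i. b i * y"] conjI TrueI refl)
  have u1: "iota (a n * (b n * y)) \<in> UU" unfolding UU_def
    by (intro CollectI exI[of _ "b n * y"] conjI TrueI refl)
  have wuWU: "wu \<in> WU" unfolding wu_def by (rule msumI[OF w1 u1])
  have PW: "inspan m NN V WU wu" using inspan_M[OF wuWU] .
  have tot: "inspan m NN V WU (\<lambda>l. (\<lambda>l. iota (a 0 * b 0 * y) l + (\<Sum>i\<in>{1..<n}. iota (a i * p * b i * y) l)) l + wu l)"
    using inspan_add[OF WU_submod inspan_add[OF WU_submod P0 PS] PW] .
  have ysplit: "y = a 0 * b 0 * y + (\<Sum>i\<in>{1..<n}. a i * p * b i * y) +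
      ((\<Sum>i\<in>{1..<n}. a i * (1 - p) * (b i * y)) + a n * (b n * y))"
  proof -
    have "y = (\<Sum>i<Suc n. a i * b i) * y" using ab by simp
    also have "\<dots> = a 0 * b 0 * y + (\<Sum>i\<in>{1..<n}. a i * b i * y) + a n * b n * y"
      using sum_split0n[OF n1, of "\<lambda>i. a i * b i"] by (simp add: distrib_right sum_distrib_right)
    also have "(\<Sum>i\<in>{1..<n}. a i * b i * y) = (\<Sum>i\<in>{1..<n}. a i * p * b i * y) + (\<Sum>i\<in>{1..<n}. a i * (1 - p) * (b i * y))"
      by (simp add: sum.distrib[symmetric] algebra_simps)
    finally show ?thesis by (simp add: algebra_simps)
  qed
  have "iota y = (\<lambda>l. (\<lambda>l. iota (a 0 * b 0 * y) l + (\<Sum>i\<in>{1..<n}. iota (a i * p * b i * y) l)) l + wu l)"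
    apply (subst ysplit)
    unfolding wu_def iota_add iota_sum by simp
  then show ?thesis using tot by simp
qed

lemma spanning: "\<forall>x. vecR m x \<longrightarrow> inspan m NN V WU x"
proof (intro allI impI)
  fix x assume x: "vecR m x"
  have "inspan m NN V WU (\<lambda>l. (\<lambda>l. \<Sum>j<m. V j l * x j) l + iota ((1 - a 0) * rho x) l)"
    using inspan_add[OF WU_submod S1[OF x] S2] .
  moreover have "\<forall>l<m. (\<Sum>j<m. V j l * x j) + iota ((1 - a 0) * rho x) l = x l"
  proof (intro allI impI)
    fix l assume l: "l < m"
    have "iota ((1 - a 0) * rho x) = iota (rho x - a 0 * rho x)" by (simp add: algebra_simps)
    then show "(\<Sum>j<m. V j l * x j) + iota ((1 - a 0) * rho x) l = x l"
      using claimA[OF x l] by (simp add: iota_diff)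
  qed
  ultimately show "inspan m NN V WU x" by (rule inspan_cong)
qed

end


context app begin

lemma reduce:
  assumes sr: "sr_condition R p n"
  shows "\<exists>c. right_unimodular UNIV 1 (\<lambda>i. a i + a n * c i) n"
proof -
  have nm: "n + m \<le> Suc NN" using n1 by simp
  have Vv: "\<forall>j<NN. vecR m (V j)" using V_vec by simp
  from T_main[OF sr nm Vv WW_submod UU_submod spanning]
  obtain \<mu> where \<mu>U: "\<forall>j<NN. \<mu> j \<in> UU"
    and spF: "\<forall>x. vecR m x \<longrightarrow> inspan m NN (\<lambda>j i. V j i + \<mu> j i) WW x"
    by (elim exE conjE) (rule that)
  have "\<forall>j\<in>{..<NN}. \<exists>z. \<mu> j = iota (a n * z)" using \<mu>U unfolding UU_def by auto
  from bchoice[OF this] obtain z where z: "\<forall>j\<in>{..<NN}. \<mu> j = iota (a n * z j)"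
    by (elim exE) (rule that)
  define c where "c i = (if i = 0 then (\<Sum>l<m. z l * p * w l) else z (m + i - 1) * p)" for i
  define g where "g l = u l + a n * (c 0 * u l - z l * p)" for l
  define L where "L x = (\<Sum>l<m. g l * x l)" for x
  define I where "I = {(\<Sum>i<n. (a i + a n * c i) * q i) | q. True}"
  have Ib: "i < n \<Longrightarrow> (a i + a n * c i) * t \<in> I" for i t
  proof -
    assume i: "i < n"
    have "(\<Sum>i'<n. (a i' + a n * c i') * (if i' = i then t else 0)) = (a i + a n * c i) * t"
      using i by (simp add: if_distrib cong: if_cong)
    then show ?thesis unfolding I_def by (intro CollectI exI[of _ "\<lambda>i'. if i' = i then t else 0"] conjI TrueI) simp
  qed
  have I0: "0 \<in> I" unfolding I_def by (intro CollectI exI[of _ "\<lambda>_. 0"] conjI TrueI) simp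
  have Iadd: "x \<in> I \<Longrightarrow> y \<in> I \<Longrightarrow> x + y \<in> I" for x y
  proof -
    assume "x \<in> I" "y \<in> I"
    then obtain q q' where "x = (\<Sum>i<n. (a i + a n * c i) * q i)" "y = (\<Sum>i<n. (a i + a n * c i) * q' i)"
      unfolding I_def by blast
    then have "x + y = (\<Sum>i<n. (a i + a n * c i) * (\<lambda>i. q i + q' i) i)"
      by (simp add: distrib_left sum.distrib)
    then show ?thesis unfolding I_def by (intro CollectI exI[of _ "\<lambda>i. q i + q' i"] conjI TrueI)
  qed
  have Imul: "x \<in> I \<Longrightarrow> x * t \<in> I" for x t
  proof -
    assume "x \<in> I"
    then obtain q where "x = (\<Sum>i<n. (a i + a n * c i) * q i)" unfolding I_def by blast
    then have "x * t = (\<Sum>i<n. (a i + a n * c i) * (\<lambda>i. q i * t) i)"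
      by (simp add: sum_distrib_right mult.assoc)
    then show ?thesis unfolding I_def by (intro CollectI exI[of _ "\<lambda>i. q i * t"] conjI TrueI)
  qed
  have Isum: "finite F \<Longrightarrow> (\<forall>i\<in>F. f i \<in> I) \<Longrightarrow> (\<Sum>i\<in>F. f i) \<in> I" for F f
    by (induction F rule: finite_induct) (auto simp: I0 Iadd)
  have L_add: "L (\<lambda>l. x l + y l) = L x + L y" for x y
    unfolding L_def by (simp add: distrib_left sum.distrib)
  have L_diff: "L (\<lambda>l. x l - y l) = L x - L y" for x y
    unfolding L_def by (simp add: right_diff_distrib sum_subtractf)
  have L_cong: "(\<forall>l<m. x l = y l) \<Longrightarrow> L x = L y" for x y
    unfolding L_def by (intro sum.cong) auto
  have L_comb: "L (\<lambda>l. (\<Sum>j<N. F j l * \<alpha> j) + v l) = (\<Sum>j<N. L (F j) * \<alpha> j) + L v" for N F \<alpha> v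
  proof -
    have "L (\<lambda>l. (\<Sum>j<N. F j l * \<alpha> j) + v l) = (\<Sum>l<m. \<Sum>j<N. g l * F j l * \<alpha> j) + L v"
      unfolding L_def by (simp add: distrib_left sum.distrib sum_distrib_left mult.assoc)
    also have "(\<Sum>l<m. \<Sum>j<N. g l * F j l * \<alpha> j) = (\<Sum>j<N. L (F j) * \<alpha> j)"
      unfolding L_def by (subst sum.swap) (simp add: sum_distrib_right)
    finally show ?thesis .
  qed
  have gw: "(\<Sum>l<m. g l * w l) = 1"
  proof -
    have "(\<Sum>l<m. g l * w l) = (\<Sum>l<m. u l * w l) + a n * (c 0 * (\<Sum>l<m. u l * w l) - (\<Sum>l<m. z l * p * w l))"
      unfolding g_def by (simp add: algebra_simps sum.distrib sum_distrib_left sum_subtractf)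
    also have "\<dots> = 1" unfolding uw c_def by simp
    finally show ?thesis .
  qed
  have L_iota: "L (iota y) = y * p" for y
  proof -
    have "L (iota y) = (\<Sum>l<m. g l * w l) * y * p"
      unfolding L_def iota_def by (simp add: sum_distrib_right mult.assoc)
    then show ?thesis using gw by simp
  qed
  have gp: "g l * p = g l" for l
    unfolding g_def by (simp add: algebra_simps mult.assoc idem)
  have L_e: "j < m \<Longrightarrow> L (\<lambda>l. if l = j then p else 0) = g j" for j
    unfolding L_def using gp by (simp add: if_distrib cong: if_cong)
  have L_in: "\<forall>j<NN. L (\<lambda>i. V j i + \<mu> j i) \<in> I"
  proof (intro allI impI)
    fix j assume j: "j < NN"
    show "L (\<lambda>i. V j i + \<mu> j i) \<in> I"
    proof (cases "j < m")
      case True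
      have "L (\<lambda>i. V j i + \<mu> j i) = L (\<lambda>l. (\<lambda>l. (\<lambda>l. iota (a 0 * u j) l + (if l = j then p else 0)) l - iota (u j) l) l + iota (a n * z j) l)"
        unfolding V_def using True z j by simp
      also have "\<dots> = a 0 * u j * p + g j - u j * p + a n * z j * p"
        unfolding L_add L_diff L_iota L_e[OF True] by (simp add: mult.assoc)
      also have "\<dots> = (a 0 + a n * c 0) * u j"
        unfolding g_def by (simp add: algebra_simps mult.assoc)
      finally show ?thesis using Ib n1 by simp
    next
      case False
      define i where "i = j - m + 1"
      have i: "1 \<le> i" "i < n" "j = m + i - 1" unfolding i_def using False j by auto
      have "L (\<lambda>i. V j i + \<mu> j i) = L (\<lambda>l. iota (a i * p) l + iota (a n * z j) l)"
        unfolding V_def using False z j i_def by simp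
      also have "\<dots> = a i * p + a n * z j * p"
        unfolding L_add L_iota by (simp add: mult.assoc idem)
      also have "\<dots> = (a i + a n * c i) * p"
        unfolding c_def using i by (simp add: algebra_simps mult.assoc idem)
      finally show ?thesis using Ib i by simp
    qed
  qed
  have L_W: "v \<in> WW \<Longrightarrow> L v \<in> I" for v
  proof -
    assume "v \<in> WW"
    then obtain z' where v: "v = iota (\<Sum>i\<in>{1..<n}. a i * (1 - p) * z' i)" unfolding WW_def by blast
    have "L v = (\<Sum>i\<in>{1..<n}. a i * (1 - p) * z' i) * p" unfolding v L_iota ..
    also have "\<dots> = (\<Sum>i\<in>{1..<n}. a i * (1 - p) * z' i * p)" by (simp add: sum_distrib_right)
    also have "\<dots> = (\<Sum>i\<in>{1..<n}. (a i + a n * c i) * ((1 - p) * z' i * p))"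
    proof (rule sum.cong[OF refl])
      fix i assume i: "i \<in> {1..<n}"
      have "c i * (1 - p) = 0" unfolding c_def using i by (simp add: algebra_simps mult.assoc idem)
      have "a n * c i * ((1 - p) * z' i * p) = a n * (c i * (1 - p)) * (z' i * p)" by (simp add: mult.assoc)
      then have "a n * c i * ((1 - p) * z' i * p) = 0" using \<open>c i * (1 - p) = 0\<close> by simp
      then show "a i * (1 - p) * z' i * p = (a i + a n * c i) * ((1 - p) * z' i * p)"
        by (simp add: distrib_right mult.assoc)
    qed
    also have "\<dots> \<in> I" using Ib by (intro Isum) auto
    finally show ?thesis .
  qed
  have yp: "y * p \<in> I" for y
  proof -
    have "inspan m NN (\<lambda>j i. V j i + \<mu> j i) WW (iota y)" using spF iota_vec by blast
    then obtain \<alpha> v where a: "\<forall>j<NN. \<alpha> j \<in> R" "v \<in> WW"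
      "\<forall>l<m. iota y l = (\<Sum>j<NN. (\<lambda>j i. V j i + \<mu> j i) j l * \<alpha> j) + v l"
      unfolding inspan_def by (elim exE conjE) (rule that)
    have "y * p = L (iota y)" using L_iota by simp
    also have "\<dots> = L (\<lambda>l. (\<Sum>j<NN. (\<lambda>j i. V j i + \<mu> j i) j l * \<alpha> j) + v l)"
      by (rule L_cong) (use a(3) in simp)
    also have "\<dots> = (\<Sum>j<NN. L (\<lambda>i. V j i + \<mu> j i) * \<alpha> j) + L v" by (rule L_comb)
    also have "\<dots> \<in> I" using L_in L_W[OF a(2)] Imul by (intro Iadd Isum) auto
    finally show ?thesis .
  qed
  have "1 \<in> I"
  proof -
    have "(\<Sum>l<m. xa l * p * yb l) \<in> I" using yp Imul by (intro Isum) auto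
    then show ?thesis using full by simp
  qed
  then obtain q where "1 = (\<Sum>i<n. (a i + a n * c i) * q i)" unfolding I_def by blast
  then have "right_unimodular UNIV 1 (\<lambda>i. a i + a n * c i) n"
    unfolding right_unimodular_def by (intro exI[of _ q] conjI) auto
  then show ?thesis by blast
qed

end


theorem theorem7:
  fixes p :: "'a::ring_1"
  assumes "full_idempotent p"
  shows "stable_rank (UNIV :: 'a set) 1 \<le> stable_rank (corner p) p"
proof (cases "\<exists>n. 1 \<le> n \<and> sr_condition (corner p) p n")
  case False
  then have "stable_rank (corner p) p = \<infinity>" unfolding stable_rank_def by (simp only: if_False)
  then show ?thesis by simp
next
  case True
  define n0 where "n0 = (LEAST n. 1 \<le> n \<and> sr_condition (corner p) p n)"
  have n0: "1 \<le> n0" "sr_condition (corner p) p n0"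
    using LeastI_ex[OF True] unfolding n0_def by auto
  have pp: "p * p = p" using assms unfolding full_idempotent_def by simp
  interpret idem p by unfold_locales (rule pp)
  have "1 \<in> two_sided_ideal_gen p" using assms unfolding full_idempotent_def by simp
  then obtain m xa yb where full: "1 = (\<Sum>i<(m::nat). xa i * p * yb i)"
    unfolding two_sided_ideal_gen_def by blast
  have srU: "sr_condition (UNIV :: 'a set) 1 n0"
    unfolding sr_condition_def
  proof (intro allI impI)
    fix a :: "nat \<Rightarrow> 'a"
    assume "right_unimodular UNIV 1 a (Suc n0)"
    then obtain b where ab: "(\<Sum>i<Suc n0. a i * b i) = 1"
      unfolding right_unimodular_def by blast
    interpret app p a b n0 m xa yb
      by unfold_locales (use n0 ab full in simp_all)
    obtain c where "right_unimodular UNIV 1 (\<lambda>i. a i + a n0 * c i) n0"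
      using reduce[OF n0(2)] by blast
    then show "reducible UNIV 1 a n0" unfolding reducible_def by blast
  qed
  have ex: "\<exists>n. 1 \<le> n \<and> sr_condition (UNIV :: 'a set) 1 n" using srU n0 by blast
  have "(LEAST n. 1 \<le> n \<and> sr_condition (UNIV :: 'a set) 1 n) \<le> n0"
    using srU n0(1) by (intro Least_le) simp
  then show ?thesis unfolding stable_rank_def using True ex n0_def by simp
qed


end
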